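(* For every positive integer $n$, $$S(n+4) \geq 111\,S(n) + 43.$$
   Context: A set $A \subseteq \mathbb{N}$ is sum-free if for all $(a,b)\in A^2$ (allowing $a=b$), $a+b \notin A$. For $n\ge 1$, the Schur number $S(n)$ is the largest integer $p$ such that $\{1,\dots,p\}$ can be partitioned into $n$ sum-free subsets. *)

theory Defs
  imports Main
begin

definition sum_free :: "nat set \<Rightarrow> bool" where
  "sum_free A \<longleftrightarrow> (\<forall>a\<in>A. \<forall>b\<in>A. a + b \<notin> A)"

text \<open>Parts may be empty (the empty set is sum-free, so this does not change S(n)).\<close>
definition schur_partitionable :: "nat \<Rightarrow> nat \<Rightarrow> bool" where
  "schur_partitionable n p \<longleftrightarrow>
     (\<exists>P :: nat \<Rightarrow> nat set.
        (\<Union>i<n. P i) = {1..p} \<and>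
        (\<forall>i<n. \<forall>j<n. i \<noteq> j \<longrightarrow> P i \<inter> P j = {}) \<and>
        (\<forall>i<n. sum_free (P i)))"

definition schur_number :: "nat \<Rightarrow> nat" where
  "schur_number n = (GREATEST p. schur_partitionable n p)"

end

theory Submission
  imports Defs
begin

definition EL :: "nat list" where "EL = [0, 6, 9, 12, 13, 15, 16, 18, 19, 20, 21, 22, 24, 25, 26, 27, 28, 29, 30, 31, 32, 33, 34, 35, 36, 37, 38, 39, 40, 41, 42, 43, 45, 46, 47, 48, 49, 51, 52, 54, 55, 58, 61, 67]"
definition N1 :: "nat list" where "N1 = [3, 4, 11, 56, 63, 64, 70, 71, 76, 78, 84, 86, 92, 94, 100, 102, 107, 108]"
definition N2 :: "nat list" where "N2 = [5, 14, 17, 23, 44, 53, 62, 80, 83, 87, 89, 91, 95, 98]"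
definition N3 :: "nat list" where "N3 = [2, 7, 60, 65, 69, 73, 74, 77, 82, 85, 93, 96, 101, 104, 105, 109]"
definition N4 :: "nat list" where "N4 = [1, 8, 10, 50, 57, 59, 66, 68, 72, 75, 79, 81, 88, 90, 97, 99, 103, 106, 110]"

lemma E_le: "\<forall>a\<in>set EL. a \<le> 67" by (simp add: EL_def)
lemma E_free: "\<forall>a\<in>set EL. \<forall>b\<in>set EL. a + b + 44 \<notin> set EL" by code_simp
lemma N1_free: "\<forall>a\<in>set N1. \<forall>b\<in>set N1. (a + b + 44) mod 111 \<notin> set N1" by code_simp
lemma N2_free: "\<forall>a\<in>set N2. \<forall>b\<in>set N2. (a + b + 44) mod 111 \<notin> set N2" by code_simp
lemma N3_free: "\<forall>a\<in>set N3. \<forall>b\<in>set N3. (a + b + 44) mod 111 \<notin> set N3" by code_simp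
lemma N4_free: "\<forall>a\<in>set N4. \<forall>b\<in>set N4. (a + b + 44) mod 111 \<notin> set N4" by code_simp
lemma cover0: "\<forall>e\<in>set [0..<111]. e \<in> set (EL @ N1 @ N2 @ N3 @ N4)"
  by code_simp
lemma cover: "e < 111 \<Longrightarrow> e \<in> set EL \<or> e \<in> set N1 \<or> e \<in> set N2 \<or> e \<in> set N3 \<or> e \<in> set N4"
  using cover0 by auto

definition colr :: "nat \<Rightarrow> nat" where
  "colr e = (if e \<in> set EL then 0 else if e \<in> set N1 then 1 else if e \<in> set N2 then 2
     else if e \<in> set N3 then 3 else 4)"

lemma colr_le: "colr e \<le> 4" by (simp add: colr_def)

lemma colr0: "colr e = 0 \<longleftrightarrow> e \<in> set EL" by (simp add: colr_def)

definition NL :: "nat \<Rightarrow> nat list" where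
  "NL c = (if c = 1 then N1 else if c = 2 then N2 else if c = 3 then N3 else N4)"

lemma NL_free: "c \<noteq> 0 \<Longrightarrow> c \<le> 4 \<Longrightarrow> \<forall>a\<in>set (NL c). \<forall>b\<in>set (NL c). (a + b + 44) mod 111 \<notin> set (NL c)"
proof -
  assume "c \<noteq> 0" "c \<le> 4"
  then have "c = 1 \<or> c = 2 \<or> c = 3 \<or> c = 4" by auto
  then show ?thesis using N1_free N2_free N3_free N4_free unfolding NL_def by auto
qed

lemma colr_N: "e < 111 \<Longrightarrow> colr e = c \<Longrightarrow> c \<noteq> 0 \<Longrightarrow> e \<in> set (NL c)"
  using cover unfolding colr_def NL_def by (auto split: if_splits)

lemma colr_free:
  assumes "a < 111" "b < 111" "colr a = c" "colr b = c" "c \<noteq> 0"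
  shows "colr ((a + b + 44) mod 111) \<noteq> c"
proof
  let ?s = "(a + b + 44) mod 111"
  assume h: "colr ?s = c"
  have s: "?s < 111" by simp
  have "a \<in> set (NL c)" "b \<in> set (NL c)" "?s \<in> set (NL c)"
    using colr_N assms h s by blast+
  moreover have "c \<le> 4" using colr_le[of a] assms by simp
  ultimately show False using NL_free assms(5) by blast
qed

fun rr :: "nat \<Rightarrow> nat" where
  "rr 0 = 2"
| "rr (Suc m) = Suc m * rr m + 1"

lemma rr_pos: "rr m \<ge> 1" by (induction m) auto

lemma triangle:
  fixes col :: "nat \<Rightarrow> nat"
  shows "finite V \<Longrightarrow> finite C \<Longrightarrow> card C \<le> m \<Longrightarrow> card V \<ge> rr m \<Longrightarrow>
    (\<forall>x\<in>V. \<forall>y\<in>V. x < y \<longrightarrow> col (y - x) \<in> C) \<Longrightarrow>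
    \<exists>x\<in>V. \<exists>y\<in>V. \<exists>z\<in>V. x < y \<and> y < z \<and> col (z - y) = col (y - x) \<and> col (z - x) = col (y - x)"
proof (induction m arbitrary: C V)
  case 0
  then have "C = {}" by auto
  from 0 have "card V \<ge> 2" by simp
  then have "V \<noteq> {}" by auto
  then obtain x where "x \<in> V" by blast
  have "card (V - {x}) \<ge> 1" using \<open>card V \<ge> 2\<close> \<open>x \<in> V\<close> 0(1) by simp
  then have "V - {x} \<noteq> {}" by (metis card.empty not_one_le_zero)
  then obtain y where "y \<in> V" "x \<noteq> y" by blast
  then show ?case using 0 \<open>C = {}\<close> \<open>x \<in> V\<close>
    by (metis empty_iff linorder_neqE_nat)
next
  case (Suc m)
  have Vne: "V \<noteq> {}" using Suc.prems rr_pos[of "Suc m"] by auto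
  define v where "v = Min V"
  have vV: "v \<in> V" using Vne Suc.prems(1) v_def by simp
  have vmin: "\<And>w. w \<in> V \<Longrightarrow> v \<le> w" using Suc.prems(1) v_def by simp
  define W where "W = V - {v}"
  have finW: "finite W" using Suc.prems(1) W_def by simp
  have cardW: "card W \<ge> Suc m * rr m" using Suc.prems(4) vV W_def Suc.prems(1) by simp
  define Wc where "Wc = (\<lambda>c. {w \<in> W. col (w - v) = c})"
  have Wun: "W = (\<Union>c\<in>C. Wc c)"
  proof
    show "W \<subseteq> (\<Union>c\<in>C. Wc c)"
    proof
      fix w assume "w \<in> W"
      then have "w \<in> V" "v < w" using W_def vmin by force+
      then have "col (w - v) \<in> C" using Suc.prems(5) vV by blast
      then show "w \<in> (\<Union>c\<in>C. Wc c)" using \<open>w \<in> W\<close> Wc_def by blast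
    qed
  qed (auto simp: Wc_def)
  have "\<exists>c\<in>C. card (Wc c) \<ge> rr m"
  proof (rule ccontr)
    assume "\<not> ?thesis"
    then have lt: "\<forall>c\<in>C. card (Wc c) \<le> rr m - 1" by auto
    have "card W \<le> (\<Sum>c\<in>C. card (Wc c))" unfolding Wun using card_UN_le Suc.prems(2) by blast
    also have "\<dots> \<le> (\<Sum>c\<in>C. rr m - 1)" using lt by (meson sum_mono)
    also have "\<dots> = card C * (rr m - 1)" by simp
    also have "\<dots> \<le> Suc m * (rr m - 1)" using Suc.prems(3) by (rule mult_le_mono1)
    also have "\<dots> < Suc m * rr m" using rr_pos[of m] by (intro mult_less_mono2) auto
    finally show False using cardW by simp
  qed
  then obtain c where cC: "c \<in> C" and cW: "card (Wc c) \<ge> rr m" by blast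
  have WcV: "Wc c \<subseteq> V" using Wc_def W_def by auto
  have Wcv: "\<And>w. w \<in> Wc c \<Longrightarrow> v < w \<and> col (w - v) = c"
    using Wc_def W_def vmin by fastforce
  show ?case
  proof (cases "\<exists>x\<in>Wc c. \<exists>y\<in>Wc c. x < y \<and> col (y - x) = c")
    case True
    then obtain x y where xy: "x \<in> Wc c" "y \<in> Wc c" "x < y" "col (y - x) = c" by blast
    have "v < x" "col (x - v) = c" "col (y - v) = c" using Wcv xy by auto
    then show ?thesis using xy vV WcV
      by (metis subsetD)
  next
    case False
    have "\<exists>x\<in>Wc c. \<exists>y\<in>Wc c. \<exists>z\<in>Wc c. x < y \<and> y < z \<and> col (z - y) = col (y - x) \<and> col (z - x) = col (y - x)"
    proof -
      have f1: "finite (Wc c)" using finW Wc_def by simp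
      have f2: "finite (C - {c})" using Suc.prems(2) by simp
      have f3: "card (C - {c}) \<le> m" using Suc.prems(3) cC Suc.prems(2) by simp
      have f4: "rr m \<le> card (Wc c)" using cW .
      have f5: "\<forall>x\<in>Wc c. \<forall>y\<in>Wc c. x < y \<longrightarrow> col (y - x) \<in> C - {c}"
        using False WcV Suc.prems(5) by blast
      show ?thesis using Suc.IH[OF f1 f2 f3 f4 f5] .
    qed
    then show ?thesis using WcV by blast
  qed
qed

lemma schur_bound:
  assumes "schur_partitionable n p"
  shows "p < rr n"
proof (rule ccontr)
  assume "\<not> p < rr n"
  then have big: "card {0..p} \<ge> rr n" by simp
  from assms obtain P where P1: "(\<Union>i<n. P i) = {1..p}"
    and P3: "\<forall>i<n. sum_free (P i)" unfolding schur_partitionable_def by blast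
  define col where "col = (\<lambda>d. SOME i. i < n \<and> d \<in> P i)"
  have colP: "col d < n \<and> d \<in> P (col d)" if "1 \<le> d" "d \<le> p" for d
  proof -
    have "d \<in> (\<Union>i<n. P i)" using P1 that by simp
    then have "\<exists>i. i < n \<and> d \<in> P i" by blast
    then show ?thesis unfolding col_def by (rule someI_ex)
  qed
  have "\<exists>x\<in>{0..p}. \<exists>y\<in>{0..p}. \<exists>z\<in>{0..p}. x < y \<and> y < z \<and> col (z - y) = col (y - x) \<and> col (z - x) = col (y - x)"
  proof (rule triangle[of _ "{..<n}" n])
    show "\<forall>x\<in>{0..p}. \<forall>y\<in>{0..p}. x < y \<longrightarrow> col (y - x) \<in> {..<n}"
      using colP by auto
  qed (use big in auto)
  then obtain x y z where xyz: "x \<le> p" "y \<le> p" "z \<le> p" "x < y" "y < z"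
    "col (z - y) = col (y - x)" "col (z - x) = col (y - x)" by auto
  define i where "i = col (y - x)"
  have "y - x \<in> P i" "z - y \<in> P i" "z - x \<in> P i" "i < n"
    using colP[of "y - x"] colP[of "z - y"] colP[of "z - x"] xyz i_def by auto
  moreover have "(y - x) + (z - y) = z - x" using xyz by simp
  ultimately show False using P3 unfolding sum_free_def by metis
qed

lemma part0: "schur_partitionable n 0"
  unfolding schur_partitionable_def sum_free_def by (rule exI[of _ "\<lambda>_. {}"]) auto

lemma schur_number_prop:
  "schur_partitionable n (schur_number n)"
  "schur_partitionable n p \<Longrightarrow> p \<le> schur_number n"
proof -
  have b: "\<forall>y. schur_partitionable n y \<longrightarrow> y \<le> rr n"
    using schur_bound less_imp_le by blast
  have b': "\<And>y. schur_partitionable n y \<Longrightarrow> y \<le> rr n" using b by blast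
  show "schur_partitionable n (schur_number n)"
    unfolding schur_number_def using GreatestI_nat[of "schur_partitionable n" 0 "rr n", OF part0 b'] .
  show "schur_partitionable n p \<Longrightarrow> p \<le> schur_number n"
    unfolding schur_number_def using Greatest_le_nat b by blast
qed

lemma old_k:
  fixes a b ka kb kc ea eb ec :: nat
  assumes "a + 67 = 111 * ka + ea" "b + 67 = 111 * kb + eb" "a + b + 67 = 111 * kc + ec"
    "ea \<le> 67" "eb \<le> 67" "ec \<le> 67" "ea + eb + 44 \<noteq> ec"
  shows "kc = ka + kb"
proof -
  have eq: "111 * kc + ec + 67 = 111 * (ka + kb) + ea + eb" using assms(1-3) by simp
  have "\<not> kc \<ge> ka + kb + 1"
  proof
    assume "kc \<ge> ka + kb + 1"
    then have "111 * kc \<ge> 111 * (ka + kb) + 111" by simp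
    then show False using eq assms(4,5) by linarith
  qed
  moreover have "\<not> kc + 2 \<le> ka + kb"
  proof
    assume "kc + 2 \<le> ka + kb"
    then have "111 * kc + 222 \<le> 111 * (ka + kb)" by simp
    then show False using eq assms(6) by linarith
  qed
  moreover have "kc + 1 \<noteq> ka + kb"
  proof
    assume "kc + 1 = ka + kb"
    then have "111 * kc + 111 = 111 * (ka + kb)" by simp
    then show False using eq assms(7) by linarith
  qed
  ultimately show ?thesis by linarith
qed

lemma construction:
  assumes "schur_partitionable n p"
  shows "schur_partitionable (n + 4) (111 * p + 43)"
proof -
  from assms obtain P where P1: "(\<Union>i<n. P i) = {1..p}"
    and P2: "\<forall>i<n. \<forall>j<n. i \<noteq> j \<longrightarrow> P i \<inter> P j = {}"
    and P3: "\<forall>i<n. sum_free (P i)" unfolding schur_partitionable_def by blast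
  define N where "N = 111 * p + 43"
  define ef where "ef = (\<lambda>x::nat. (x + 67) mod 111)"
  define kf where "kf = (\<lambda>x::nat. (x + 67) div 111)"
  define Q where "Q = (\<lambda>i. if i < n then {x \<in> {1..N}. colr (ef x) = 0 \<and> kf x \<in> P i}
      else {x \<in> {1..N}. colr (ef x) = i - n + 1})"
  have dm: "x + 67 = 111 * kf x + ef x" for x unfolding kf_def ef_def by simp
  have ef_lt: "ef x < 111" for x unfolding ef_def by simp
  have efsum: "ef (a + b) = (ef a + ef b + 44) mod 111" for a b
  proof -
    have "(a + b + 67) mod 111 = ((a + 67) + (b + 67) + 44) mod 111"
    proof -
      have "(a + 67) + (b + 67) + 44 = (a + b + 67) + 111" by simp
      then show ?thesis by (metis mod_add_self2)
    qed
    also have "\<dots> = ((a + 67) mod 111 + (b + 67) mod 111 + 44) mod 111"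
      by (metis mod_add_eq mod_add_left_eq)
    finally show ?thesis unfolding ef_def .
  qed
  have E67: "colr e = 0 \<Longrightarrow> e \<le> 67" for e using colr0 E_le by blast
  have cov: "(\<Union>i<n + 4. Q i) = {1..N}"
  proof
    show "(\<Union>i<n + 4. Q i) \<subseteq> {1..N}" unfolding Q_def by (auto split: if_splits)
  next
    show "{1..N} \<subseteq> (\<Union>i<n + 4. Q i)"
    proof
      fix x assume x: "x \<in> {1..N}"
      show "x \<in> (\<Union>i<n + 4. Q i)"
      proof (cases "colr (ef x) = 0")
        case True
        have e: "ef x \<le> 67" using E67 True by blast
        have "kf x \<ge> 1" using dm[of x] e x by (cases "kf x") auto
        moreover have "kf x \<le> p"
        proof (rule ccontr)
          assume "\<not> kf x \<le> p"
          then have "111 * kf x \<ge> 111 * p + 111" by simp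
          moreover have "x \<le> 111 * p + 43" using x unfolding N_def by simp
          ultimately show False using dm[of x] by linarith
        qed
        ultimately have "kf x \<in> (\<Union>i<n. P i)" using P1 by simp
        then obtain i where "i < n" "kf x \<in> P i" by blast
        then have "x \<in> Q i" using x True unfolding Q_def by simp
        then show ?thesis using \<open>i < n\<close> by auto
      next
        case False
        define i where "i = n + colr (ef x) - 1"
        have "i < n + 4" "\<not> i < n" using colr_le[of "ef x"] False i_def by auto
        moreover have "x \<in> Q i" using x False \<open>\<not> i < n\<close> unfolding Q_def i_def by simp
        ultimately show ?thesis by blast
      qed
    qed
  qed
  have disj: "\<forall>i<n + 4. \<forall>j<n + 4. i \<noteq> j \<longrightarrow> Q i \<inter> Q j = {}"
  proof (intro allI impI)
    fix i j assume ij: "i < n + 4" "j < n + 4" "i \<noteq> j"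
    show "Q i \<inter> Q j = {}"
    proof (cases "i < n")
      case True
      show ?thesis
      proof (cases "j < n")
        case True
        then show ?thesis using \<open>i < n\<close> P2 ij unfolding Q_def by auto
      qed (use True in \<open>auto simp: Q_def\<close>)
    next
      case False
      then show ?thesis using ij unfolding Q_def by auto
    qed
  qed
  have sf: "\<forall>i<n + 4. sum_free (Q i)"
  proof (intro allI impI)
    fix i assume i: "i < n + 4"
    show "sum_free (Q i)" unfolding sum_free_def
    proof (intro ballI notI)
      fix a b assume ab: "a \<in> Q i" "b \<in> Q i" "a + b \<in> Q i"
      show False
      proof (cases "i < n")
        case True
        then have h: "colr (ef a) = 0" "colr (ef b) = 0" "colr (ef (a + b)) = 0"
          "kf a \<in> P i" "kf b \<in> P i" "kf (a + b) \<in> P i" using ab unfolding Q_def by auto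
        have inE: "ef a \<in> set EL" "ef b \<in> set EL" "ef (a + b) \<in> set EL"
          using h colr0 by auto
        have "ef a + ef b + 44 \<noteq> ef (a + b)" using E_free inE by metis
        then have "kf (a + b) = kf a + kf b"
          using old_k[OF dm[of a] dm[of b] dm[of "a + b"]] E67 h by blast
        then show False using P3 True h unfolding sum_free_def by metis
      next
        case False
        then have h: "colr (ef a) = i - n + 1" "colr (ef b) = i - n + 1"
          "colr (ef (a + b)) = i - n + 1" using ab unfolding Q_def by auto
        then show False using colr_free[OF ef_lt ef_lt h(1) h(2)] efsum by simp
      qed
    qed
  qed
  show ?thesis unfolding schur_partitionable_def N_def[symmetric]
    using cov disj sf by blast
qed

theorem mainTheorem4:
  fixes n :: nat
  assumes "n \<ge> 1"
  shows "schur_number (n + 4) \<ge> 111 * schur_number n + 43"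
  using schur_number_prop(2)[OF construction[OF schur_number_prop(1)]] .

end
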